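(* Let $E$ be a real Hilbert space, $C\subseteq E$ nonempty closed convex, $\rho=\sup_{x,y\in C}\lVert x-y\rVert\in[0,+\infty]$, $a\in C$, $0<\theta_1\leqslant\dots\leqslant\theta_T$, and $\widehat{x}_t^*\in E$ arbitrary predictions. Suppose the learner plays $\widetilde{x}_1=a$, $\widetilde{x}_t=P_C\big(\widetilde{x}_{t-1}-\theta_{t-1}x_{t-1}^*\big)$ for $t\geqslant2$, and $x_t=P_C\big(\widetilde{x}_t-\theta_t\widehat{x}_t^*\big)$. Then for all $z\in C$, \[\mathrm{Regret}(z,\dots,z)\leqslant\frac1{2\theta_1}\lVert z-a\rVert^2+\sum_{t=1}^T\frac1{\theta_t}Q_\rho^\star\big(\theta_t\lVert x_t^*-\widehat{x}_t^*\rVert\big)-\sum_{t=1}^T\frac1{2\theta_t}\lVert x_t-\widetilde{x}_t\rVert^2,\] and also \[\mathrm{Regret}(z,\dots,z)\leqslant\frac1{2\theta_1}\lVert z-a\rVert^2+\sum_{t=1}^T\frac1{\theta_t}\Phi_{\theta_t}(x_t^*,\widehat{x}_t^* )-\sum_{t=1}^T\frac1{2\theta_t}\lVert y_t-\widetilde{x}_t\rVert^2,\] where $y_t=P_C\big(\widetilde{x}_t-\theta_t\widehat{y}_t^*\big)$.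
   Context: $P_C$ is the metric projection onto $C$. Protocol: at rounds $t=1,\dots,T$ the learner plays $x_t\in C$, the adversary reveals a proper $\varphi_t\colon E\to(-\infty,+\infty]$ with $C\subseteq\operatorname{dom}\partial\varphi_t$, and $x_t^*\in\partial\varphi_t(x_t)$ ($E$ identified with its dual). $\mathrm{Regret}(z,\dots,z)=\sum_t\varphi_t(x_t)-\sum_t\varphi_t(z)$. $Q_\rho^\star(\varkappa)=\frac12\varkappa^2-\frac12(\lvert\varkappa\rvert-\rho)_+^2$ (with $Q_\infty^\star(\varkappa)=\frac12\varkappa^2$), $x_+=\max\{x,0\}$. $\widehat{y}_t^*=\lambda\widehat{x}_t^*+(1-\lambda)x_t^*$, $\lambda=\min\{\lVert x_t^*\rVert/\lVert x_t^*-\widehat{x}_t^*\rVert,1\}$ (any $\lambda$ if $x_t^*=\widehat{x}_t^*$). For $\xi>0$: $\Phi_\xi(x^*,\widehat{x}^* )=Q_\rho^\star\big(\xi\min\{\lVert x^*-\widehat{x}^*\rVert,\lVert x^*\rVert\}\big)+\xi\lVert x^*\rVert\min\{\xi(\lVert x^*-\widehat{x}^*\rVert-\lVert x^*\rVert)_+,\rho\}$. *)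

theory Defs
  imports "HOL-Analysis.Analysis" "HOL-Library.Extended_Real"
begin

text \<open>Metric projection onto C (well defined for nonempty closed convex C in a
  real Hilbert space: the nearest point exists and is unique).\<close>
definition metric_proj :: "'a::real_inner set \<Rightarrow> 'a \<Rightarrow> 'a" where
  "metric_proj C x = (THE p. p \<in> C \<and> (\<forall>y\<in>C. dist x p \<le> dist x y))"

definition proper_fun :: "('a \<Rightarrow> ereal) \<Rightarrow> bool" where
  "proper_fun f \<longleftrightarrow> (\<forall>x. f x \<noteq> -\<infinity>) \<and> (\<exists>x. f x \<noteq> \<infinity>)"

definition subdiff :: "('a::real_inner \<Rightarrow> ereal) \<Rightarrow> 'a \<Rightarrow> 'a set" where
  "subdiff f x = {s. \<bar>f x\<bar> \<noteq> \<infinity> \<and>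
      (\<forall>y. f y \<ge> f x + ereal (inner s (y - x)))}"

definition dom_subdiff :: "('a::real_inner \<Rightarrow> ereal) \<Rightarrow> 'a set" where
  "dom_subdiff f = {x. subdiff f x \<noteq> {}}"

definition diam_e :: "'a::metric_space set \<Rightarrow> ereal" where
  "diam_e C = (SUP p\<in>C \<times> C. ereal (dist (fst p) (snd p)))"

definition pos_part :: "real \<Rightarrow> real" where
  "pos_part x = max x 0"

definition Qstar :: "ereal \<Rightarrow> real \<Rightarrow> real" where
  "Qstar \<rho> k = (if \<rho> = \<infinity> then k\<^sup>2 / 2
                 else k\<^sup>2 / 2 - (pos_part (\<bar>k\<bar> - real_of_ereal \<rho>))\<^sup>2 / 2)"

definition min_e :: "real \<Rightarrow> ereal \<Rightarrow> real" where
  "min_e r \<rho> = (if \<rho> = \<infinity> then r else min r (real_of_ereal \<rho>))"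

definition Phi :: "ereal \<Rightarrow> real \<Rightarrow> 'a::real_normed_vector \<Rightarrow> 'a \<Rightarrow> real" where
  "Phi \<rho> \<xi> xs xh =
     Qstar \<rho> (\<xi> * min (norm (xs - xh)) (norm xs))
     + \<xi> * norm xs * min_e (\<xi> * pos_part (norm (xs - xh) - norm xs)) \<rho>"

text \<open>hat y^* = lambda hat x^* + (1-lambda) x^*, lambda = min{|x^*|/|x^*-hat x^*|, 1};
  when x^* = hat x^* any lambda gives hat y^* = x^* (here division by 0 gives lambda = 0).\<close>
definition yhat :: "'a::real_normed_vector \<Rightarrow> 'a \<Rightarrow> 'a" where
  "yhat xs xh = (let l = min (norm xs / norm (xs - xh)) 1 in
                  l *\<^sub>R xh + (1 - l) *\<^sub>R xs)"

end

theory Submission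
  imports Defs
begin


lemma parallelogram_real_inner:
  fixes a b :: "'a::real_inner"
  shows "norm (a - b)^2 + norm (a + b)^2 = 2*norm a^2 + 2*norm b^2"
  by (simp add: power2_norm_eq_inner inner_add_left inner_add_right inner_diff_left inner_diff_right inner_commute)

lemma mid_bound:
  fixes y p q :: "'a::real_inner"
  assumes "d \<le> norm (y - (1/2) *\<^sub>R (p + q))" "0 \<le> d"
  shows "norm (p - q)^2 \<le> 2*norm (y-p)^2 + 2*norm (y-q)^2 - 4*d^2"
proof -
  have e: "norm ((y-p) - (y-q))^2 + norm ((y-p) + (y-q))^2 = 2*norm (y-p)^2 + 2*norm (y-q)^2"
    by (rule parallelogram_real_inner)
  have "(y-p) + (y-q) = 2 *\<^sub>R (y - (1/2) *\<^sub>R (p + q))" by (simp add: algebra_simps scaleR_2)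
  hence "norm ((y-p) + (y-q)) = 2 * norm (y - (1/2) *\<^sub>R (p + q))" by simp
  moreover have "(y-p) - (y-q) = q - p" by simp
  moreover have "d^2 \<le> norm (y - (1/2) *\<^sub>R (p + q))^2" using assms by (simp add: power_mono)
  ultimately show ?thesis using e by (simp add: norm_minus_commute power_mult_distrib)
qed

lemma proj_exists:
  fixes C :: "'a::{real_inner,complete_space} set"
  assumes C: "C \<noteq> {}" "closed C" "convex C"
  shows "\<exists>p\<in>C. \<forall>w\<in>C. dist y p \<le> dist y w"
proof -
  define d where "d = infdist y C"
  have d0: "0 \<le> d" unfolding d_def by (rule infdist_nonneg)
  have bdd: "bdd_below ((\<lambda>a. dist y a) ` C)" by (rule bdd_belowI[of _ 0]) auto
  have "\<exists>c\<in>C. dist y c < sqrt (d^2 + 1/Suc n)" for n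
  proof -
    have "sqrt (d^2) < sqrt (d^2 + 1/Suc n)" by (intro real_sqrt_less_mono) simp
    hence "d < sqrt (d^2 + 1/Suc n)" using d0 by simp
    hence "(INF a\<in>C. dist y a) < sqrt (d^2 + 1/Suc n)" using C(1) by (simp add: d_def infdist_notempty)
    thus ?thesis using cINF_less_iff[OF C(1) bdd] by blast
  qed
  then obtain c where c: "\<And>n. c n \<in> C" "\<And>n. dist y (c n) < sqrt (d^2 + 1/Suc n)" by metis
  have c2: "norm (y - c n)^2 \<le> d^2 + 1/Suc n" for n
  proof -
    have "norm (y - c n) \<le> sqrt (d^2 + 1/Suc n)" using c(2)[of n] by (simp add: dist_norm less_imp_le)
    hence "norm (y - c n)^2 \<le> (sqrt (d^2 + 1/Suc n))^2" by (rule power_mono) simp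
    also have "\<dots> = d^2 + 1/Suc n" by (simp add: add_nonneg_nonneg)
    finally show ?thesis .
  qed
  have cm: "norm (c m - c n)^2 \<le> 2/Suc m + 2/Suc n" for m n
  proof -
    have "(1/2) *\<^sub>R (c m + c n) = (1/2) *\<^sub>R c m + (1 - 1/2) *\<^sub>R c n" by (simp add: algebra_simps)
    also have "\<dots> \<in> C" using C(3) c(1) by (intro convexD) auto
    finally have "d \<le> norm (y - (1/2) *\<^sub>R (c m + c n))" unfolding d_def
      by (metis dist_norm infdist_le)
    from mid_bound[OF this d0] have "norm (c m - c n)^2 \<le> 2*norm (y-c m)^2 + 2*norm (y-c n)^2 - 4*d^2" .
    thus ?thesis using c2[of m] c2[of n] by simp
  qed
  have "Cauchy c"
  proof (rule CauchyI)
    fix e :: real assume e: "0 < e"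
    obtain M where M: "4 / e^2 < real (Suc M)" using reals_Archimedean2 by (metis less_Suc_eq of_nat_less_iff less_trans)
    have M4: "4 / real (Suc M) < e^2" using e M by (simp add: mult.commute pos_divide_less_eq)
    have "\<forall>m\<ge>M. \<forall>n\<ge>M. norm (c m - c n) < e"
    proof (intro allI impI)
      fix m n assume mn: "M \<le> m" "M \<le> n"
      have "2 / real (Suc m) \<le> 2 / real (Suc M)" using mn by (simp add: frac_le)
      moreover have "2 / real (Suc n) \<le> 2 / real (Suc M)" using mn by (simp add: frac_le)
      ultimately have "norm (c m - c n)^2 < e^2" using cm[of m n] M4 by linarith
      thus "norm (c m - c n) < e" using e power2_less_imp_less less_imp_le by metis
    qed
    thus "\<exists>M. \<forall>m\<ge>M. \<forall>n\<ge>M. norm (c m - c n) < e" by blast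
  qed
  then obtain l where l: "c \<longlonglongrightarrow> l" using Cauchy_convergent_iff convergent_def by blast
  have lC: "l \<in> C" using closed_sequentially[OF C(2) _ l] c(1) by blast
  have t1: "(\<lambda>n. norm (y - c n)^2) \<longlonglongrightarrow> norm (y - l)^2" using l by (intro tendsto_intros)
  have t2: "(\<lambda>n. d^2 + inverse (real (Suc n))) \<longlonglongrightarrow> d^2 + 0"
    by (intro tendsto_intros LIMSEQ_inverse_real_of_nat)
  have "norm (y - l)^2 \<le> d^2 + 0"
  proof (rule LIMSEQ_le[OF t1 t2])
    show "\<exists>N. \<forall>n\<ge>N. norm (y - c n)^2 \<le> d^2 + inverse (real (Suc n))"
      using c2 by (metis inverse_eq_divide)
  qed
  hence "norm (y - l) \<le> d" using d0 power2_le_imp_le by simp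
  hence "\<forall>w\<in>C. dist y l \<le> dist y w" unfolding d_def by (metis dist_norm infdist_le order_trans)
  thus ?thesis using lC by blast
qed



lemma norm_diff_scale_sq:
  fixes a b :: "'a::real_inner"
  shows "norm (a - t *\<^sub>R b)^2 = norm a^2 - 2*t*inner a b + t^2 * norm b^2"
  unfolding power2_norm_eq_inner
  by (simp add: inner_diff_left inner_diff_right inner_commute power2_eq_square algebra_simps)

lemma proj_unique:
  fixes C :: "'a::real_inner set"
  assumes "convex C" "p \<in> C" "q \<in> C" "\<forall>w\<in>C. dist y p \<le> dist y w" "\<forall>w\<in>C. dist y q \<le> dist y w"
  shows "p = q"
proof -
  have eq: "norm (y - p) = norm (y - q)" using assms by (metis dist_norm order_antisym)
  have "(1/2) *\<^sub>R (p + q) = (1/2) *\<^sub>R p + (1 - 1/2) *\<^sub>R q" by (simp add: algebra_simps)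
  also have "\<dots> \<in> C" using assms by (intro convexD) auto
  finally have "norm (y - p) \<le> norm (y - (1/2) *\<^sub>R (p + q))" using assms(4) by (simp add: dist_norm)
  from mid_bound[OF this norm_ge_zero] have "norm (p - q)^2 \<le> 0" using eq by simp
  thus ?thesis by simp
qed

lemma metric_proj:
  fixes C :: "'a::{real_inner,complete_space} set"
  assumes C: "C \<noteq> {}" "closed C" "convex C"
  shows "metric_proj C y \<in> C" "\<And>w. w \<in> C \<Longrightarrow> dist y (metric_proj C y) \<le> dist y w"
proof -
  have ex: "\<exists>!p. p \<in> C \<and> (\<forall>w\<in>C. dist y p \<le> dist y w)"
    using proj_exists[OF C, of y] proj_unique[OF C(3)] by metis
  from theI'[OF ex] show "metric_proj C y \<in> C" "\<And>w. w \<in> C \<Longrightarrow> dist y (metric_proj C y) \<le> dist y w"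
    unfolding metric_proj_def by auto
qed

lemma proj_VI:
  fixes C :: "'a::{real_inner,complete_space} set"
  assumes C: "C \<noteq> {}" "closed C" "convex C" and w: "w \<in> C"
  shows "inner (y - metric_proj C y) (w - metric_proj C y) \<le> 0"
proof (rule ccontr)
  define p where "p = metric_proj C y"
  define s where "s = inner (y - p) (w - p)"
  define K where "K = norm (w - p)^2"
  assume "\<not> inner (y - metric_proj C y) (w - metric_proj C y) \<le> 0"
  hence s: "s > 0" by (simp add: s_def p_def)
  have K: "K \<ge> 0" by (simp add: K_def)
  define t where "t = min 1 (s / (K + 1))"
  have t0: "0 < t" "t \<le> 1" using s K by (auto simp: t_def)
  have tK: "t \<le> s / (K+1)" by (simp add: t_def)
  have pC: "p \<in> C" using metric_proj(1)[OF C] by (simp add: p_def)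
  have "(1 - t) *\<^sub>R p + t *\<^sub>R w \<in> C" using C(3) pC w t0 by (intro convexD) auto
  hence "dist y p \<le> dist y ((1 - t) *\<^sub>R p + t *\<^sub>R w)" using metric_proj(2)[OF C] by (simp add: p_def)
  moreover have "y - ((1 - t) *\<^sub>R p + t *\<^sub>R w) = (y - p) - t *\<^sub>R (w - p)" by (simp add: algebra_simps)
  ultimately have "norm (y - p) \<le> norm ((y - p) - t *\<^sub>R (w - p))" by (simp add: dist_norm)
  hence "norm (y - p)^2 \<le> norm ((y - p) - t *\<^sub>R (w - p))^2" by (rule power_mono) simp
  hence "0 \<le> t^2 * K - 2*t* s" unfolding norm_diff_scale_sq s_def K_def by simp
  hence "2* s \<le> t*K" using t0 by (simp add: power2_eq_square algebra_simps)
  also have "t*K \<le> s/(K+1) * K" by (rule mult_right_mono[OF tK K])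
  also have "\<dots> < s" using s K by (simp add: field_simps)
  finally show False using s by simp
qed

lemma proj_nonexp:
  fixes C :: "'a::{real_inner,complete_space} set"
  assumes C: "C \<noteq> {}" "closed C" "convex C"
  shows "norm (metric_proj C x - metric_proj C y) \<le> norm (x - y)"
proof -
  define p where "p = metric_proj C x"
  define q where "q = metric_proj C y"
  have pq: "p \<in> C" "q \<in> C" using metric_proj(1)[OF C] by (auto simp: p_def q_def)
  have 1: "inner (x - p) (q - p) \<le> 0" using proj_VI[OF C pq(2), of x] by (simp add: p_def)
  have 2: "inner (y - q) (p - q) \<le> 0" using proj_VI[OF C pq(1), of y] by (simp add: q_def)
  have "norm (p - q)^2 \<le> inner (x - y) (p - q)"
    using 1 2 by (simp add: power2_norm_eq_inner inner_diff_left inner_diff_right inner_commute algebra_simps)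
  also have "\<dots> \<le> norm (x - y) * norm (p - q)" by (rule norm_cauchy_schwarz)
  finally have "norm (p - q) * norm (p - q) \<le> norm (x - y) * norm (p - q)" by (simp add: power2_eq_square)
  hence "norm (p - q) \<le> norm (x - y)"
    by (metis mult_right_le_imp_le norm_ge_zero order.order_iff_strict mult_zero_right norm_zero zero_less_norm_iff)
  thus ?thesis by (simp add: p_def q_def)
qed



lemma lin_comb:
  fixes G1 :: real
  shows "G1 \<le> A \<Longrightarrow> H \<le> B \<Longrightarrow> A = (a1 - a2 - a3)/2 \<Longrightarrow> B = (a3 - a4 - a5)/2
   \<Longrightarrow> Gx = G1 + M + H \<Longrightarrow> P - a4/2 \<le> Q \<Longrightarrow> a6 = a5 \<Longrightarrow> M \<le> P \<Longrightarrow> Gx \<le> (a1 - a2)/2 + Q - a6/2"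
  by argo

lemma Q_bound:
  assumes "0 \<le> k" "0 \<le> d" "ereal d \<le> \<rho>"
  shows "k * d - d^2/2 \<le> Qstar \<rho> k"
proof (cases "\<rho> = \<infinity>")
  case True
  have "0 \<le> (k - d)^2" by simp
  thus ?thesis using True by (simp add: Qstar_def power2_eq_square algebra_simps)
next
  case False
  then obtain r where r: "\<rho> = ereal r" using assms(3) by (cases \<rho>) auto
  have dr: "d \<le> r" using assms(3) r by simp
  show ?thesis
  proof (cases "k \<le> r")
    case True
    have "0 \<le> (k - d)^2" by simp
    thus ?thesis using True r assms(1) by (simp add: Qstar_def pos_part_def power2_eq_square algebra_simps)
  next
    case False
    have "0 \<le> (r - d) * (k - (r + d)/2)" using False dr by (intro mult_nonneg_nonneg) auto
    moreover have "(r - d) * (k - (r + d)/2) = k*r - r^2/2 - (k*d - d^2/2)" by (simp add: field_simps power2_eq_square)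
    moreover have "Qstar \<rho> k = k*r - r^2/2" using False r assms(1)
      by (simp add: Qstar_def pos_part_def power2_eq_square field_simps)
    ultimately show ?thesis by linarith
  qed
qed

lemma min_e_bound:
  assumes "d \<le> r" "ereal d \<le> \<rho>"
  shows "d \<le> min_e r \<rho>"
proof (cases "\<rho> = \<infinity>")
  case True thus ?thesis using assms by (simp add: min_e_def)
next
  case False
  then obtain r' where r: "\<rho> = ereal r'" using assms(2) by (cases \<rho>) auto
  thus ?thesis using assms by (simp add: min_e_def)
qed

lemma yhat_norms:
  fixes g h :: "'a::real_normed_vector"
  shows "norm (g - yhat g h) = min (norm (g - h)) (norm g)"
    and "norm (h - yhat g h) = pos_part (norm (g - h) - norm g)"
proof -
  define l where "l = min (norm g / norm (g - h)) 1"
  have y: "yhat g h = l *\<^sub>R h + (1 - l) *\<^sub>R g" by (simp add: yhat_def l_def Let_def)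
  have l0: "0 \<le> l" "l \<le> 1" by (auto simp: l_def)
  have e1: "g - yhat g h = l *\<^sub>R (g - h)" by (simp add: y algebra_simps)
  have e2: "h - yhat g h = (1 - l) *\<^sub>R (h - g)" by (simp add: y algebra_simps)
  have n1: "norm (g - yhat g h) = l * norm (g - h)" using e1 l0 by simp
  have n2: "norm (h - yhat g h) = (1 - l) * norm (g - h)" using e2 l0 by (simp add: norm_minus_commute)
  show "norm (g - yhat g h) = min (norm (g - h)) (norm g)"
  proof (cases "g = h")
    case True thus ?thesis using n1 by simp
  next
    case False
    hence p: "norm (g - h) > 0" by simp
    have "l * norm (g - h) = min (norm g) (norm (g - h))"
      using p by (simp add: l_def min_def field_simps)
    thus ?thesis using n1 by (simp add: min.commute)
  qed
  show "norm (h - yhat g h) = pos_part (norm (g - h) - norm g)"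
  proof (cases "g = h")
    case True thus ?thesis using n2 by (simp add: pos_part_def)
  next
    case False
    hence p: "norm (g - h) > 0" by simp
    have "(1 - l) * norm (g - h) = max (norm (g - h) - norm g) 0"
      using p by (simp add: l_def min_def max_def field_simps)
    thus ?thesis using n2 by (simp add: pos_part_def)
  qed
qed

lemma polar3:
  fixes a b c :: "'a::real_inner"
  shows "inner (a - b) (b - c) = (norm (a - c)^2 - norm (b - c)^2 - norm (a - b)^2) / 2"
proof -
  have "a - c = (a - b) + (b - c)" by simp
  hence "norm (a - c)^2 = norm (a - b)^2 + 2 * inner (a - b) (b - c) + norm (b - c)^2"
    by (metis power2_norm_eq_inner inner_add_left inner_add_right inner_commute mult_2 add.assoc)
  thus ?thesis by simp
qed

lemma diam_bound:
  assumes "p \<in> C" "q \<in> C"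
  shows "ereal (norm (p - q)) \<le> diam_e C"
proof -
  have "ereal (dist (fst (p,q)) (snd (p,q))) \<le> diam_e C"
    unfolding diam_e_def using assms by (intro SUP_upper) auto
  thus ?thesis by (simp add: dist_norm)
qed

lemma one_step:
  fixes C :: "'a::{real_inner,complete_space} set"
  assumes C: "C \<noteq> {}" "closed C" "convex C" and u: "u \<in> C" and z: "z \<in> C" and th: "0 < \<theta>"
  shows "\<theta> * inner g (metric_proj C (u - \<theta> *\<^sub>R h) - z)
     \<le> (norm (u - z)^2 - norm (metric_proj C (u - \<theta> *\<^sub>R g) - z)^2) / 2
        + Qstar (diam_e C) (\<theta> * norm (g - h)) - norm (metric_proj C (u - \<theta> *\<^sub>R h) - u)^2 / 2"
proof -
  define x where "x = metric_proj C (u - \<theta> *\<^sub>R h)"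
  define u' where "u' = metric_proj C (u - \<theta> *\<^sub>R g)"
  have xC: "x \<in> C" and u'C: "u' \<in> C" using metric_proj(1)[OF C] by (auto simp: x_def u'_def)
  have v1: "inner ((u - \<theta> *\<^sub>R g) - u') (z - u') \<le> 0" using proj_VI[OF C z] by (simp add: u'_def)
  have v2: "inner ((u - \<theta> *\<^sub>R h) - x) (u' - x) \<le> 0" using proj_VI[OF C u'C] by (simp add: x_def)
  have v1': "inner (u - u') (z - u') - \<theta> * inner g (z - u') \<le> 0"
    using v1 by (simp add: inner_diff_left algebra_simps)
  have v2': "inner (u - x) (u' - x) - \<theta> * inner h (u' - x) \<le> 0"
    using v2 by (simp add: inner_diff_left algebra_simps)
  have p1: "inner (u - u') (u' - z) = (norm (u - z)^2 - norm (u' - z)^2 - norm (u - u')^2) / 2"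
    by (rule polar3)
  have p2: "inner (u - x) (x - u') = (norm (u - u')^2 - norm (x - u')^2 - norm (u - x)^2) / 2"
    by (rule polar3)
  have s1: "inner (u - u') (z - u') = - inner (u - u') (u' - z)"
    by (metis inner_minus_right minus_diff_eq)
  have s2: "inner (u - x) (u' - x) = - inner (u - x) (x - u')"
    by (metis inner_minus_right minus_diff_eq)
  have s3: "\<theta> * inner g (z - u') = - (\<theta> * inner g (u' - z))" by (metis inner_minus_right minus_diff_eq mult_minus_right)
  have s4: "\<theta> * inner h (u' - x) = - (\<theta> * inner h (x - u'))" by (metis inner_minus_right minus_diff_eq mult_minus_right)
  have split0: "inner g (x - z) = inner g (u' - z) + inner (g - h) (x - u') + inner h (x - u')"
    by (simp add: inner_diff_left inner_diff_right)
  have split: "\<theta> * inner g (x - z) = \<theta> * inner g (u' - z) + \<theta> * inner (g - h) (x - u') + \<theta> * inner h (x - u')"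
    unfolding split0 by (simp add: distrib_left)
  have nx: "norm (x - u)^2 = norm (u - x)^2" by (simp add: norm_minus_commute)
  have cs: "inner (g - h) (x - u') \<le> norm (g - h) * norm (x - u')" by (rule norm_cauchy_schwarz)
  have Q0: "(\<theta> * norm (g - h)) * norm (x - u') - norm (x - u')^2/2 \<le> Qstar (diam_e C) (\<theta> * norm (g - h))"
    using diam_bound[OF xC u'C] th by (intro Q_bound) auto
  have Q: "\<theta> * (norm (g - h) * norm (x - u')) - norm (x - u')^2/2 \<le> Qstar (diam_e C) (\<theta> * norm (g - h))"
    using Q0 by (simp add: mult.assoc)
  have "\<theta> * inner (g - h) (x - u') \<le> \<theta> * (norm (g - h) * norm (x - u'))"
    using cs th by simp
  hence "\<theta> * inner g (x - z) \<le> (norm (u - z)^2 - norm (u' - z)^2) / 2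
        + Qstar (diam_e C) (\<theta> * norm (g - h)) - norm (x - u)^2 / 2"
  proof -
    have a1: "\<theta> * inner g (u' - z) \<le> inner (u - u') (u' - z)" using v1' s1 s3 by linarith
    have a2: "\<theta> * inner h (x - u') \<le> inner (u - x) (x - u')" using v2' s2 s4 by linarith
    show ?thesis by (rule lin_comb[OF a1 a2 p1 p2 split Q nx \<open>\<theta> * inner (g - h) (x - u') \<le> _\<close>])
  qed
  thus ?thesis by (simp add: x_def u'_def)
qed



lemma phi_step:
  fixes C :: "'a::{real_inner,complete_space} set"
  assumes C: "C \<noteq> {}" "closed C" "convex C" and u: "u \<in> C" and z: "z \<in> C" and th: "0 < \<theta>"
  shows "\<theta> * inner g (metric_proj C (u - \<theta> *\<^sub>R h) - z)
     \<le> (norm (u - z)^2 - norm (metric_proj C (u - \<theta> *\<^sub>R g) - z)^2) / 2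
        + Phi (diam_e C) \<theta> g h - norm (metric_proj C (u - \<theta> *\<^sub>R yhat g h) - u)^2 / 2"
proof -
  define x where "x = metric_proj C (u - \<theta> *\<^sub>R h)"
  define y where "y = metric_proj C (u - \<theta> *\<^sub>R yhat g h)"
  have xC: "x \<in> C" and yC: "y \<in> C" using metric_proj(1)[OF C] by (auto simp: x_def y_def)
  have S: "\<theta> * inner g (y - z)
     \<le> (norm (u - z)^2 - norm (metric_proj C (u - \<theta> *\<^sub>R g) - z)^2) / 2
        + Qstar (diam_e C) (\<theta> * norm (g - yhat g h)) - norm (y - u)^2 / 2"
    using one_step[OF C u z th, of g "yhat g h"] by (simp add: y_def)
  have "norm (x - y) \<le> norm ((u - \<theta> *\<^sub>R h) - (u - \<theta> *\<^sub>R yhat g h))"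
    unfolding x_def y_def by (rule proj_nonexp[OF C])
  also have "(u - \<theta> *\<^sub>R h) - (u - \<theta> *\<^sub>R yhat g h) = \<theta> *\<^sub>R (yhat g h - h)" by (simp add: algebra_simps)
  also have "norm (\<theta> *\<^sub>R (yhat g h - h)) = \<theta> * norm (h - yhat g h)"
    using th by (simp add: norm_minus_commute)
  also have "\<dots> = \<theta> * pos_part (norm (g - h) - norm g)" by (simp add: yhat_norms(2))
  finally have xy1: "norm (x - y) \<le> \<theta> * pos_part (norm (g - h) - norm g)" .
  have xy2: "ereal (norm (x - y)) \<le> diam_e C" by (rule diam_bound[OF xC yC])
  have mn: "norm (x - y) \<le> min_e (\<theta> * pos_part (norm (g - h) - norm g)) (diam_e C)"
    by (rule min_e_bound[OF xy1 xy2])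
  have "\<theta> * inner g (x - y) \<le> \<theta> * (norm g * norm (x - y))"
    using th norm_cauchy_schwarz[of g "x - y"] by simp
  also have "\<dots> \<le> \<theta> * (norm g * min_e (\<theta> * pos_part (norm (g - h) - norm g)) (diam_e C))"
    using th mn by (simp add: mult_left_mono)
  finally have T2: "\<theta> * inner g (x - y) \<le> \<theta> * norm g * min_e (\<theta> * pos_part (norm (g - h) - norm g)) (diam_e C)"
    by (simp add: mult.assoc)
  have sp: "\<theta> * inner g (x - z) = \<theta> * inner g (y - z) + \<theta> * inner g (x - y)"
    by (simp add: inner_diff_right algebra_simps)
  have ph: "Phi (diam_e C) \<theta> g h = Qstar (diam_e C) (\<theta> * norm (g - yhat g h))
      + \<theta> * norm g * min_e (\<theta> * pos_part (norm (g - h) - norm g)) (diam_e C)"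
    by (simp add: Phi_def yhat_norms(1))
  have ny: "norm (y - u) = norm (u - y)" by (rule norm_minus_commute)
  show ?thesis using S T2 sp ph unfolding x_def[symmetric] y_def[symmetric] by (simp add: ny)
qed

lemma telescope:
  fixes D D' \<theta> :: "nat \<Rightarrow> real"
  assumes "1 \<le> n" "\<And>t. t \<in> {1..<n} \<Longrightarrow> D' t = D (Suc t)" "\<And>t. t \<in> {1..n} \<Longrightarrow> 0 < \<theta> t"
    "\<And>t. t \<in> {1..<n} \<Longrightarrow> \<theta> t \<le> \<theta> (Suc t)" "\<And>t. 0 \<le> D' t"
  shows "(\<Sum>t=1..n. (D t - D' t) / (2 * \<theta> t)) \<le> D 1 / (2 * \<theta> 1) - D' n / (2 * \<theta> n)"
  using assms
proof (induction n)
  case 0 thus ?case by simp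
next
  case (Suc n)
  show ?case
  proof (cases "n = 0")
    case True thus ?thesis by (simp add: diff_divide_distrib)
  next
    case False
    hence n1: "1 \<le> n" by simp
    have IH: "(\<Sum>t=1..n. (D t - D' t) / (2 * \<theta> t)) \<le> D 1 / (2 * \<theta> 1) - D' n / (2 * \<theta> n)"
      using Suc.prems by (intro Suc.IH[OF n1]) auto
    have eq: "D' n = D (Suc n)" using Suc.prems(2)[of n] n1 by simp
    have th: "0 < \<theta> n" "\<theta> n \<le> \<theta> (Suc n)" using Suc.prems(3)[of n] Suc.prems(4)[of n] n1 by auto
    have "D (Suc n) / (2 * \<theta> (Suc n)) \<le> D (Suc n) / (2 * \<theta> n)"
      using th eq Suc.prems(5)[of n] by (intro divide_left_mono) auto
    hence "(\<Sum>t=1..Suc n. (D t - D' t) / (2 * \<theta> t))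
         = (\<Sum>t=1..n. (D t - D' t) / (2 * \<theta> t)) + (D (Suc n) - D' (Suc n)) / (2 * \<theta> (Suc n))"
      by simp
    thus ?thesis using IH eq \<open>D (Suc n) / (2 * \<theta> (Suc n)) \<le> D (Suc n) / (2 * \<theta> n)\<close>
      by (simp add: diff_divide_distrib)
  qed
qed



theorem corollary8:
  fixes C :: "'a::{real_inner,complete_space} set"
    and a :: 'a and T :: nat and \<theta> :: "nat \<Rightarrow> real"
    and \<phi> :: "nat \<Rightarrow> 'a \<Rightarrow> ereal"
    and x xt xs xh :: "nat \<Rightarrow> 'a"
  assumes C: "C \<noteq> {}" "closed C" "convex C"
    and a: "a \<in> C"
    and T: "T \<ge> 1"
    and \<theta>_pos: "\<And>t. t \<in> {1..T} \<Longrightarrow> 0 < \<theta> t"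
    and \<theta>_mono: "\<And>t. t \<in> {1..<T} \<Longrightarrow> \<theta> t \<le> \<theta> (Suc t)"
    and \<phi>: "\<And>t. t \<in> {1..T} \<Longrightarrow> proper_fun (\<phi> t) \<and> C \<subseteq> dom_subdiff (\<phi> t)"
    and xt1: "xt 1 = a"
    and xt_rec: "\<And>t. t \<in> {2..T} \<Longrightarrow>
                   xt t = metric_proj C (xt (t - 1) - \<theta> (t - 1) *\<^sub>R xs (t - 1))"
    and x_def: "\<And>t. t \<in> {1..T} \<Longrightarrow> x t = metric_proj C (xt t - \<theta> t *\<^sub>R xh t)"
    and xs_sub: "\<And>t. t \<in> {1..T} \<Longrightarrow> xs t \<in> subdiff (\<phi> t) (x t)"
    and z: "z \<in> C"
  shows "(\<Sum>t=1..T. real_of_ereal (\<phi> t (x t))) - (\<Sum>t=1..T. real_of_ereal (\<phi> t z))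
           \<le> (norm (z - a))\<^sup>2 / (2 * \<theta> 1)
             + (\<Sum>t=1..T. Qstar (diam_e C) (\<theta> t * norm (xs t - xh t)) / \<theta> t)
             - (\<Sum>t=1..T. (norm (x t - xt t))\<^sup>2 / (2 * \<theta> t))
       \<and> (\<Sum>t=1..T. real_of_ereal (\<phi> t (x t))) - (\<Sum>t=1..T. real_of_ereal (\<phi> t z))
           \<le> (norm (z - a))\<^sup>2 / (2 * \<theta> 1)
             + (\<Sum>t=1..T. Phi (diam_e C) (\<theta> t) (xs t) (xh t) / \<theta> t)
             - (\<Sum>t=1..T. (norm (metric_proj C (xt t - \<theta> t *\<^sub>R yhat (xs t) (xh t)) - xt t))\<^sup>2
                          / (2 * \<theta> t))"
proof -
  define D where "D t = norm (xt t - z)^2" for t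
  define D' where "D' t = norm (metric_proj C (xt t - \<theta> t *\<^sub>R xs t) - z)^2" for t
  have xtC: "xt t \<in> C" if "t \<in> {1..T}" for t
  proof (cases "t = 1")
    case True thus ?thesis using a xt1 by simp
  next
    case False
    hence "t \<in> {2..T}" using that by auto
    thus ?thesis using xt_rec metric_proj(1)[OF C] by metis
  qed
  have reg: "real_of_ereal (\<phi> t (x t)) - real_of_ereal (\<phi> t z) \<le> inner (xs t) (x t - z)"
    if t: "t \<in> {1..T}" for t
  proof -
    have sd: "\<bar>\<phi> t (x t)\<bar> \<noteq> \<infinity>" "\<And>y. \<phi> t y \<ge> \<phi> t (x t) + ereal (inner (xs t) (y - x t))"
      using xs_sub[OF t] unfolding subdiff_def by auto
    have "z \<in> dom_subdiff (\<phi> t)" using \<phi>[OF t] z by auto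
    then obtain s where "s \<in> subdiff (\<phi> t) z" unfolding dom_subdiff_def by auto
    hence fz: "\<bar>\<phi> t z\<bar> \<noteq> \<infinity>" unfolding subdiff_def by auto
    obtain A where A: "\<phi> t (x t) = ereal A" using sd(1) by (cases "\<phi> t (x t)") auto
    obtain B where B: "\<phi> t z = ereal B" using fz by (cases "\<phi> t z") auto
    have "ereal B \<ge> ereal A + ereal (inner (xs t) (z - x t))" using sd(2)[of z] A B by simp
    hence "B \<ge> A + inner (xs t) (z - x t)" by simp
    moreover have "inner (xs t) (z - x t) = - inner (xs t) (x t - z)"
      by (metis inner_minus_right minus_diff_eq)
    ultimately show ?thesis using A B by simp
  qed
  have step1: "inner (xs t) (x t - z) \<le> (D t - D' t) / (2 * \<theta> t) + Qstar (diam_e C) (\<theta> t * norm (xs t - xh t)) / \<theta> t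
       - (norm (x t - xt t))\<^sup>2 / (2 * \<theta> t)" if t: "t \<in> {1..T}" for t
  proof -
    have th: "0 < \<theta> t" using \<theta>_pos[OF t] .
    have "\<theta> t * inner (xs t) (x t - z) \<le> (D t - D' t) / 2 + Qstar (diam_e C) (\<theta> t * norm (xs t - xh t))
       - (norm (x t - xt t))\<^sup>2 / 2"
      using one_step[OF C xtC[OF t] z th, of "xs t" "xh t"] x_def[OF t] by (simp add: D_def D'_def)
    hence "inner (xs t) (x t - z) \<le> ((D t - D' t) / 2 + Qstar (diam_e C) (\<theta> t * norm (xs t - xh t))
       - (norm (x t - xt t))\<^sup>2 / 2) / \<theta> t" using th by (simp add: pos_le_divide_eq mult.commute)
    also have "\<dots> = (D t - D' t) / (2 * \<theta> t) + Qstar (diam_e C) (\<theta> t * norm (xs t - xh t)) / \<theta> t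
       - (norm (x t - xt t))\<^sup>2 / (2 * \<theta> t)" using th by (simp add: field_simps)
    finally show ?thesis .
  qed
  have step2: "inner (xs t) (x t - z) \<le> (D t - D' t) / (2 * \<theta> t) + Phi (diam_e C) (\<theta> t) (xs t) (xh t) / \<theta> t
       - (norm (metric_proj C (xt t - \<theta> t *\<^sub>R yhat (xs t) (xh t)) - xt t))\<^sup>2 / (2 * \<theta> t)" if t: "t \<in> {1..T}" for t
  proof -
    have th: "0 < \<theta> t" using \<theta>_pos[OF t] .
    have "\<theta> t * inner (xs t) (x t - z) \<le> (D t - D' t) / 2 + Phi (diam_e C) (\<theta> t) (xs t) (xh t)
       - (norm (metric_proj C (xt t - \<theta> t *\<^sub>R yhat (xs t) (xh t)) - xt t))\<^sup>2 / 2"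
      using phi_step[OF C xtC[OF t] z th, of "xs t" "xh t"] x_def[OF t] by (simp add: D_def D'_def)
    hence "inner (xs t) (x t - z) \<le> ((D t - D' t) / 2 + Phi (diam_e C) (\<theta> t) (xs t) (xh t)
       - (norm (metric_proj C (xt t - \<theta> t *\<^sub>R yhat (xs t) (xh t)) - xt t))\<^sup>2 / 2) / \<theta> t"
      using th by (simp add: pos_le_divide_eq mult.commute)
    also have "\<dots> = (D t - D' t) / (2 * \<theta> t) + Phi (diam_e C) (\<theta> t) (xs t) (xh t) / \<theta> t
       - (norm (metric_proj C (xt t - \<theta> t *\<^sub>R yhat (xs t) (xh t)) - xt t))\<^sup>2 / (2 * \<theta> t)"
      using th by (simp add: field_simps)
    finally show ?thesis .
  qed
  have tel: "(\<Sum>t=1..T. (D t - D' t) / (2 * \<theta> t)) \<le> (norm (z - a))\<^sup>2 / (2 * \<theta> 1)"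
  proof -
    have "(\<Sum>t=1..T. (D t - D' t) / (2 * \<theta> t)) \<le> D 1 / (2 * \<theta> 1) - D' T / (2 * \<theta> T)"
    proof (rule telescope[OF T])
      fix t assume t: "t \<in> {1..<T}"
      hence "Suc t \<in> {2..T}" by auto
      from xt_rec[OF this] show "D' t = D (Suc t)" by (simp add: D_def D'_def)
    qed (use \<theta>_pos \<theta>_mono in \<open>auto simp: D'_def\<close>)
    moreover have "0 \<le> D' T / (2 * \<theta> T)" using \<theta>_pos[of T] T by (simp add: D'_def)
    moreover have "D 1 / (2 * \<theta> 1) = (norm (z - a))\<^sup>2 / (2 * \<theta> 1)" using xt1 by (simp add: D_def norm_minus_commute)
    ultimately show ?thesis by linarith
  qed
  have L: "(\<Sum>t=1..T. real_of_ereal (\<phi> t (x t))) - (\<Sum>t=1..T. real_of_ereal (\<phi> t z))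
      \<le> (\<Sum>t=1..T. inner (xs t) (x t - z))"
    unfolding sum_subtractf[symmetric] by (rule sum_mono) (use reg in auto)
  have R1: "(\<Sum>t=1..T. inner (xs t) (x t - z)) \<le> (\<Sum>t=1..T. (D t - D' t) / (2 * \<theta> t))
      + (\<Sum>t=1..T. Qstar (diam_e C) (\<theta> t * norm (xs t - xh t)) / \<theta> t)
      - (\<Sum>t=1..T. (norm (x t - xt t))\<^sup>2 / (2 * \<theta> t))"
    unfolding sum.distrib[symmetric] sum_subtractf[symmetric] by (rule sum_mono) (use step1 in auto)
  have R2: "(\<Sum>t=1..T. inner (xs t) (x t - z)) \<le> (\<Sum>t=1..T. (D t - D' t) / (2 * \<theta> t))
      + (\<Sum>t=1..T. Phi (diam_e C) (\<theta> t) (xs t) (xh t) / \<theta> t)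
      - (\<Sum>t=1..T. (norm (metric_proj C (xt t - \<theta> t *\<^sub>R yhat (xs t) (xh t)) - xt t))\<^sup>2 / (2 * \<theta> t))"
    unfolding sum.distrib[symmetric] sum_subtractf[symmetric] by (rule sum_mono) (use step2 in auto)
  show ?thesis using L R1 R2 tel by linarith
qed

end
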